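(* Each of the axioms CORE, JR, PJR, EJR, PJR+, EJR+ and FJR (viewed as a mapping from approval profiles to the set of $k$-committees satisfying it) is a group-satisfaction-threshold (GST) axiom; that is, for each such axiom $X$ there exists a function $\tau:\mathcal A_k\times 2^{\mathcal E}\to\{0,1,\dots,k+1\}$ such that for every profile $P$ and every $W\in\mathcal A_k$: $W\in X(P)$ if and only if for all $G\subseteq\mathcal E$, $\left(\vec w_G-\frac{\tau(W,G)}{k}\vec 1\right)\cdot\mathrm{Hist}(P)<0$.
   Context: $\mathcal A=[m]$, $1\le k\le m$, $\mathcal A_k$ is the set of $k$-subsets of $\mathcal A$, $\mathcal E=2^{\mathcal A}$. A profile is $P=(A_1,\dots,A_n)\in\mathcal E^n$ ($n\ge1$ voters); $\mathrm{Hist}(P)\in\mathbb Z_{\ge0}^{\mathcal E}$ counts occurrences of each ballot. For $G\subseteq\mathcal E$, $\vec w_G\in\{0,1\}^{\mathcal E}$ is the indicator vector of $G$, and $\vec 1$ is the all-ones vector. A "group" is a set $N'\subseteq[n]$ of voters. For $\ell\ge1$, $N'$ is $\ell$-cohesive if $|N'|\ge\ell n/k$ and $|\bigcap_{j\in N'}A_j|\ge\ell$. - CORE: $W\in\mathcal A_k$ is in CORE$(P)$ iff for every nonempty $N'\subseteq[n]$ and every $W'\subseteq\mathcal A$ with $|W'|/k\le|N'|/n$ there is $j\in N'$ with $|A_j\cap W'|\le|A_j\cap W|$. - JR: for every 1-cohesive $N'$ there is $j\in N'$ with $|A_j\cap W|\ge1$. - EJR: for every $\ell\ge1$ and every $\ell$-cohesive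 $N'$ there is $j\in N'$ with $|A_j\cap W|\ge\ell$. - PJR: for every $\ell\ge1$ and every $\ell$-cohesive $N'$, $|W\cap\bigcup_{j\in N'}A_j|\ge\ell$. - EJR+: there are no $a\in\mathcal A\setminus W$, $\ell\ge1$ and $N'$ with $|N'|\ge\ell n/k$ such that every $j\in N'$ has $a\in A_j$ and $|A_j\cap W|<\ell$. - PJR+: there are no $a\in\mathcal A\setminus W$, $\ell\ge1$ and $N'$ with $|N'|\ge\ell n/k$ such that $a\in A_j$ for all $j\in N'$ and $|W\cap\bigcup_{j\in N'}A_j|<\ell$. - FJR: for every $\beta\ge1$, $T\subseteq\mathcal A$ and every $N'$ with $|N'|\ge|T|n/k$ and $|A_j\cap T|\ge\beta$ for all $j\in N'$, there is $j\in N'$ with $|A_j\cap W|\ge\beta$. *)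

theory Defs
  imports Main Complex_Main
begin

(* Ballots: subsets of A (E = Pow A).
   A profile is a nonempty list of ballots; voter j (0 <= j < length P) has ballot P ! j.
   n = length P.  Groups are subsets of {0..<length P}. *)

definition alts :: "nat \<Rightarrow> nat set" where
  "alts m = {1..m}"

definition committees :: "nat \<Rightarrow> nat \<Rightarrow> nat set set" where
  "committees m k = {W. W \<subseteq> alts m \<and> card W = k}"

definition profile :: "nat \<Rightarrow> nat set list \<Rightarrow> bool" where
  "profile m P \<longleftrightarrow> length P \<ge> 1 \<and> (\<forall>j < length P. P ! j \<subseteq> alts m)"

definition voters :: "nat set list \<Rightarrow> nat set" where
  "voters P = {0..<length P}"

definition hist :: "nat set list \<Rightarrow> nat set \<Rightarrow> nat" where
  "hist P B = card {j \<in> voters P. P ! j = B}"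

definition wvec :: "nat set set \<Rightarrow> nat set \<Rightarrow> real" where
  "wvec G B = (if B \<in> G then 1 else 0)"

definition gst_val :: "nat \<Rightarrow> nat \<Rightarrow> nat set list \<Rightarrow> nat set set \<Rightarrow> nat \<Rightarrow> real" where
  "gst_val m k P G t = (\<Sum>B \<in> Pow (alts m). (wvec G B - real t / real k) * real (hist P B))"

definition cohesive :: "nat \<Rightarrow> nat set list \<Rightarrow> nat \<Rightarrow> nat set \<Rightarrow> bool" where
  "cohesive k P l N' \<longleftrightarrow> N' \<subseteq> voters P \<and>
     real (card N') \<ge> real l * real (length P) / real k \<and>
     card (\<Inter>j \<in> N'. P ! j) \<ge> l"

definition CORE :: "nat \<Rightarrow> nat \<Rightarrow> nat set list \<Rightarrow> nat set \<Rightarrow> bool" where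
  "CORE m k P W \<longleftrightarrow> (\<forall>N' W'. N' \<subseteq> voters P \<and> N' \<noteq> {} \<and> W' \<subseteq> alts m \<and>
      real (card W') / real k \<le> real (card N') / real (length P) \<longrightarrow>
      (\<exists>j \<in> N'. card (P ! j \<inter> W') \<le> card (P ! j \<inter> W)))"

definition JR :: "nat \<Rightarrow> nat \<Rightarrow> nat set list \<Rightarrow> nat set \<Rightarrow> bool" where
  "JR m k P W \<longleftrightarrow> (\<forall>N'. cohesive k P 1 N' \<longrightarrow> (\<exists>j \<in> N'. card (P ! j \<inter> W) \<ge> 1))"

definition EJR :: "nat \<Rightarrow> nat \<Rightarrow> nat set list \<Rightarrow> nat set \<Rightarrow> bool" where
  "EJR m k P W \<longleftrightarrow> (\<forall>l N'. l \<ge> 1 \<and> cohesive k P l N' \<longrightarrow>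
      (\<exists>j \<in> N'. card (P ! j \<inter> W) \<ge> l))"

definition PJR :: "nat \<Rightarrow> nat \<Rightarrow> nat set list \<Rightarrow> nat set \<Rightarrow> bool" where
  "PJR m k P W \<longleftrightarrow> (\<forall>l N'. l \<ge> 1 \<and> cohesive k P l N' \<longrightarrow>
      card (W \<inter> (\<Union>j \<in> N'. P ! j)) \<ge> l)"

definition EJR_plus :: "nat \<Rightarrow> nat \<Rightarrow> nat set list \<Rightarrow> nat set \<Rightarrow> bool" where
  "EJR_plus m k P W \<longleftrightarrow> \<not> (\<exists>a l N'. a \<in> alts m - W \<and> l \<ge> 1 \<and> N' \<subseteq> voters P \<and>
      real (card N') \<ge> real l * real (length P) / real k \<and>
      (\<forall>j \<in> N'. a \<in> P ! j \<and> card (P ! j \<inter> W) < l))"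

definition PJR_plus :: "nat \<Rightarrow> nat \<Rightarrow> nat set list \<Rightarrow> nat set \<Rightarrow> bool" where
  "PJR_plus m k P W \<longleftrightarrow> \<not> (\<exists>a l N'. a \<in> alts m - W \<and> l \<ge> 1 \<and> N' \<subseteq> voters P \<and>
      real (card N') \<ge> real l * real (length P) / real k \<and>
      (\<forall>j \<in> N'. a \<in> P ! j) \<and> card (W \<inter> (\<Union>j \<in> N'. P ! j)) < l)"

(* groups N' are taken nonempty here (otherwise T = {} makes FJR unsatisfiable) *)
definition FJR :: "nat \<Rightarrow> nat \<Rightarrow> nat set list \<Rightarrow> nat set \<Rightarrow> bool" where
  "FJR m k P W \<longleftrightarrow> (\<forall>\<beta> T N'. \<beta> \<ge> 1 \<and> T \<subseteq> alts m \<and> N' \<subseteq> voters P \<and> N' \<noteq> {} \<and>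
      real (card N') \<ge> real (card T) * real (length P) / real k \<and>
      (\<forall>j \<in> N'. card (P ! j \<inter> T) \<ge> \<beta>) \<longrightarrow>
      (\<exists>j \<in> N'. card (P ! j \<inter> W) \<ge> \<beta>))"

definition GST :: "nat \<Rightarrow> nat \<Rightarrow> (nat set list \<Rightarrow> nat set \<Rightarrow> bool) \<Rightarrow> bool" where
  "GST m k X \<longleftrightarrow> (\<exists>\<tau> :: nat set \<Rightarrow> nat set set \<Rightarrow> nat.
     (\<forall>W G. \<tau> W G \<le> k + 1) \<and>
     (\<forall>P W. profile m P \<and> W \<in> committees m k \<longrightarrow>
        (X P W \<longleftrightarrow> (\<forall>G. G \<subseteq> Pow (alts m) \<longrightarrow> gst_val m k P G (\<tau> W G) < 0))))"

end

theory Submission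
  imports Defs
begin


lemma sum_card_fiber:
  assumes "finite S" "finite V"
  shows "(\<Sum>B\<in>S. card {j\<in>V. f j = B}) = card {j\<in>V. f j \<in> S}"
proof -
  have "{j\<in>V. f j \<in> S} = (\<Union>B\<in>S. {j\<in>V. f j = B})" by auto
  moreover have "card (\<Union>B\<in>S. {j\<in>V. f j = B}) = (\<Sum>B\<in>S. card {j\<in>V. f j = B})"
    by (rule card_UN_disjoint) (use assms in auto)
  ultimately show ?thesis by simp
qed

lemma finite_alts[simp]: "finite (alts m)" by (simp add: alts_def)

lemma gst_val_eq:
  assumes "profile m P" "G \<subseteq> Pow (alts m)"
  shows "gst_val m k P G t = real (card {j\<in>voters P. P!j \<in> G}) - real t / real k * real (length P)"
proof -
  have fG: "finite G" using assms(2) finite_subset by (metis finite_Pow_iff finite_alts)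
  have fV: "finite (voters P)" by (simp add: voters_def)
  have "(\<Sum>B\<in>Pow (alts m). wvec G B * real (hist P B)) = (\<Sum>B\<in>Pow (alts m). if B \<in> G then real (hist P B) else 0)"
    by (rule sum.cong) (auto simp: wvec_def)
  also have "\<dots> = (\<Sum>B\<in>Pow (alts m) \<inter> G. real (hist P B))"
    by (rule sum.inter_restrict[symmetric]) simp
  also have "Pow (alts m) \<inter> G = G" using assms(2) by blast
  also have "(\<Sum>B\<in>G. real (hist P B)) = real (\<Sum>B\<in>G. hist P B)" by simp
  also have "(\<Sum>B\<in>G. hist P B) = card {j\<in>voters P. P!j \<in> G}"
    unfolding hist_def by (rule sum_card_fiber[OF fG fV])
  finally have h1: "(\<Sum>B\<in>Pow (alts m). wvec G B * real (hist P B)) = real (card {j\<in>voters P. P!j \<in> G})" .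
  have "(\<Sum>B\<in>Pow (alts m). hist P B) = card {j\<in>voters P. P!j \<in> Pow (alts m)}"
    unfolding hist_def by (rule sum_card_fiber) (simp_all add: fV)
  also have "{j\<in>voters P. P!j \<in> Pow (alts m)} = voters P"
    using assms(1) by (auto simp: profile_def voters_def)
  finally have h2: "(\<Sum>B\<in>Pow (alts m). real (hist P B)) = real (length P)"
    by (simp add: voters_def flip: of_nat_sum)
  have "gst_val m k P G t = (\<Sum>B\<in>Pow (alts m). wvec G B * real (hist P B)) - real t / real k * (\<Sum>B\<in>Pow (alts m). real (hist P B))"
    unfolding gst_val_def by (simp add: left_diff_distrib sum_subtractf sum_distrib_left)
  then show ?thesis using h1 h2 by simp
qed

lemma gst_generic:
  assumes k: "1 \<le> k"
  and anti: "\<And>W G G' l. C W G l \<Longrightarrow> G' \<subseteq> G \<Longrightarrow> G' \<noteq> {} \<Longrightarrow> G \<subseteq> Pow (alts m) \<Longrightarrow> C W G' l"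
  and eq: "\<And>P W. profile m P \<Longrightarrow> W \<in> committees m k \<Longrightarrow> X P W \<longleftrightarrow> \<not>(\<exists>N' l. N' \<subseteq> voters P \<and> N' \<noteq> {} \<and> 1 \<le> l \<and>
            real l * real (length P) / real k \<le> real (card N') \<and> C W ((!) P ` N') l)"
  shows "GST m k X"
proof -
  define Q where "Q W G l \<longleftrightarrow> 1 \<le> l \<and> l \<le> k \<and> C W G l \<and> G \<noteq> {}" for W G l
  define \<tau> where "\<tau> W G = (if \<exists>l. Q W G l then LEAST l. Q W G l else k+1)" for W G
  have tle: "\<tau> W G \<le> k + 1" for W G
  proof (cases "\<exists>l. Q W G l")
    case True
    then have "Q W G (LEAST l. Q W G l)" by (rule LeastI_ex)
    then have "(LEAST l. Q W G l) \<le> k" unfolding Q_def by blast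
    then show ?thesis using True by (simp add: \<tau>_def)
  qed (simp add: \<tau>_def)
  have main: "X P W \<longleftrightarrow> (\<forall>G. G \<subseteq> Pow (alts m) \<longrightarrow> gst_val m k P G (\<tau> W G) < 0)"
    if P: "profile m P" and W: "W \<in> committees m k" for P W
  proof -
    define n where "n = length P"
    have n1: "1 \<le> n" using P by (simp add: profile_def n_def)
    have kpos: "real k > 0" using k by simp
    have npos: "real n > 0" using n1 by simp
    have cardV: "card (voters P) = n" by (simp add: voters_def n_def)
    have fV: "finite (voters P)" by (simp add: voters_def)
    have gv: "gst_val m k P G t = real (card {j\<in>voters P. P!j \<in> G}) - real t / real k * real n"
      if "G \<subseteq> Pow (alts m)" for G t using gst_val_eq[OF P that] n_def by simp
    show ?thesis
      unfolding eq[OF P W]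
    proof
      assume nv: "\<not>(\<exists>N' l. N' \<subseteq> voters P \<and> N' \<noteq> {} \<and> 1 \<le> l \<and>
            real l * real (length P) / real k \<le> real (card N') \<and> C W ((!) P ` N') l)"
      show "\<forall>G. G \<subseteq> Pow (alts m) \<longrightarrow> gst_val m k P G (\<tau> W G) < 0"
      proof (intro allI impI, rule ccontr)
        fix G assume G: "G \<subseteq> Pow (alts m)" and ge: "\<not> gst_val m k P G (\<tau> W G) < 0"
        define N' where "N' = {j\<in>voters P. P!j \<in> G}"
        have ge2: "real (\<tau> W G) / real k * real n \<le> real (card N')" using ge gv[OF G] N'_def by simp
        have cN: "card N' \<le> n" unfolding N'_def using cardV fV
          by (metis (no_types, lifting) card_mono mem_Collect_eq subsetI)
        show False
        proof (cases "\<exists>l. Q W G l")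
          case False
          then have "\<tau> W G = k + 1" by (simp add: \<tau>_def)
          have "real (k+1) / real k * real n \<le> real n" using ge2 cN \<open>\<tau> W G = k + 1\<close> by (metis of_nat_le_iff order_trans)
          moreover have "real (k+1) / real k * real n > real n"
            using kpos npos by (simp add: field_simps)
          ultimately show False by simp
        next
          case True
          then have q: "Q W G (\<tau> W G)" unfolding \<tau>_def by (simp add: LeastI_ex)
          let ?l = "\<tau> W G"
          have "real ?l * real n / real k > 0" using q npos kpos by (simp add: Q_def)
          then have ne: "N' \<noteq> {}" using ge2 by auto
          have "C W ((!) P ` N') ?l"
            by (rule anti[of W G]) (use q G N'_def ne in \<open>auto simp: Q_def\<close>)
          moreover have "N' \<subseteq> voters P" by (simp add: N'_def)
          ultimately show False using nv ne q ge2 n_def by (auto simp: Q_def)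
        qed
      qed
    next
      assume all: "\<forall>G. G \<subseteq> Pow (alts m) \<longrightarrow> gst_val m k P G (\<tau> W G) < 0"
      show "\<not>(\<exists>N' l. N' \<subseteq> voters P \<and> N' \<noteq> {} \<and> 1 \<le> l \<and>
            real l * real (length P) / real k \<le> real (card N') \<and> C W ((!) P ` N') l)"
      proof
        assume "\<exists>N' l. N' \<subseteq> voters P \<and> N' \<noteq> {} \<and> 1 \<le> l \<and>
            real l * real (length P) / real k \<le> real (card N') \<and> C W ((!) P ` N') l"
        then obtain N' l where N': "N' \<subseteq> voters P" "N' \<noteq> {}" "1 \<le> l"
          "real l * real n / real k \<le> real (card N')" "C W ((!) P ` N') l" by (auto simp: n_def)
        define G where "G = (!) P ` N'"
        have G: "G \<subseteq> Pow (alts m)"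
        proof
          fix B assume "B \<in> G"
          then obtain j where j: "j \<in> N'" "B = P ! j" by (auto simp: G_def)
          then have "j < length P" using N'(1) by (auto simp: voters_def)
          then show "B \<in> Pow (alts m)" using P j by (simp add: profile_def)
        qed
        have cN: "card N' \<le> n" using N'(1) cardV fV card_mono by metis
        have "real l * real n / real k \<le> real n" using N'(4) cN by linarith
        then have "real l \<le> real k" using kpos npos by (simp add: field_simps)
        then have lk: "l \<le> k" by simp
        have q: "Q W G l" using N' lk by (auto simp: Q_def G_def)
        then have tl: "\<tau> W G \<le> l" unfolding \<tau>_def by (auto intro: Least_le)
        have sub: "N' \<subseteq> {j\<in>voters P. P!j \<in> G}" using N'(1) by (auto simp: G_def)
        have "card N' \<le> card {j\<in>voters P. P!j \<in> G}" using sub fV by (simp add: card_mono)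
        then have c: "real (card N') \<le> real (card {j\<in>voters P. P!j \<in> G})" by simp
        have t: "real (\<tau> W G) / real k * real n \<le> real l * real n / real k"
          using tl kpos npos by (simp add: field_simps)
        have ge0: "gst_val m k P G (\<tau> W G) \<ge> 0" unfolding gv[OF G] using c t N'(4) by linarith
        have "gst_val m k P G (\<tau> W G) < 0" using all G by blast
        then show False using ge0 by linarith
      qed
    qed
  qed
  show ?thesis unfolding GST_def using tle main by blast
qed



lemma nonempty_bound:
  assumes "1 \<le> l" "1 \<le> n" "1 \<le> k" "real l * real n / real k \<le> real (card N')"
  shows "N' \<noteq> {}"
proof
  assume "N' = {}"
  moreover have "real l * real n / real k > 0" using assms by simp
  ultimately show False using assms(4) by simp
qed

lemma inter_card_anti:
  assumes "G' \<subseteq> G" "G' \<noteq> {}" "G \<subseteq> Pow (alts m)"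
  shows "card (\<Inter>G) \<le> card (\<Inter>G')"
proof -
  obtain B where B: "B \<in> G'" using assms(2) by blast
  then have "B \<in> Pow (alts m)" using assms(1,3) by (meson subsetD)
  then have "B \<subseteq> alts m" by simp
  moreover have "\<Inter>G' \<subseteq> B" using B by (rule Inter_lower)
  ultimately have "\<Inter>G' \<subseteq> alts m" by (rule order_trans[rotated])
  then have "finite (\<Inter>G')" by (rule finite_subset) simp
  moreover have "\<Inter>G \<subseteq> \<Inter>G'" using assms(1) by (rule Inter_anti_mono)
  ultimately show ?thesis by (rule card_mono)
qed

lemma union_card_anti:
  assumes "G' \<subseteq> G" "G \<subseteq> Pow (alts m)"
  shows "card (W \<inter> \<Union>G') \<le> card (W \<inter> \<Union>G)"
proof -
  have "\<Union>G \<subseteq> alts m"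
  proof (rule Union_least)
    fix X assume "X \<in> G" then have "X \<in> Pow (alts m)" using assms(2) by (rule subsetD[rotated])
    then show "X \<subseteq> alts m" by simp
  qed
  then have "W \<inter> \<Union>G \<subseteq> alts m" by (rule le_infI2)
  then have "finite (W \<inter> \<Union>G)" by (rule finite_subset) simp
  moreover have "W \<inter> \<Union>G' \<subseteq> W \<inter> \<Union>G" using assms(1) by (intro Int_mono order_refl Union_mono)
  ultimately show ?thesis by (rule card_mono)
qed

lemma prof_n: "profile m P \<Longrightarrow> 1 \<le> length P" by (simp add: profile_def)

definition viol :: "nat \<Rightarrow> nat set list \<Rightarrow> (nat set set \<Rightarrow> nat \<Rightarrow> bool) \<Rightarrow> bool" where
  "viol k P C \<longleftrightarrow> (\<exists>N' l. N' \<subseteq> voters P \<and> N' \<noteq> {} \<and> 1 \<le> l \<and>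
            real l * real (length P) / real k \<le> real (card N') \<and> C ((!) P ` N') l)"

lemma gst_generic2:
  assumes k: "1 \<le> k"
  and anti: "\<And>W G G' l. C W G l \<Longrightarrow> G' \<subseteq> G \<Longrightarrow> G' \<noteq> {} \<Longrightarrow> G \<subseteq> Pow (alts m) \<Longrightarrow> C W G' l"
  and eq: "\<And>P W. profile m P \<Longrightarrow> W \<in> committees m k \<Longrightarrow> X P W \<longleftrightarrow> \<not> viol k P (C W)"
  shows "GST m k X"
proof (rule gst_generic[of k C m X])
  show "1 \<le> k" by (rule k)
  show "\<And>W G G' l. C W G l \<Longrightarrow> G' \<subseteq> G \<Longrightarrow> G' \<noteq> {} \<Longrightarrow> G \<subseteq> Pow (alts m) \<Longrightarrow> C W G' l"
    by (rule anti)
  fix P W assume a: "profile m P" "W \<in> committees m k"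
  show "X P W \<longleftrightarrow> \<not>(\<exists>N' l. N' \<subseteq> voters P \<and> N' \<noteq> {} \<and> 1 \<le> l \<and>
            real l * real (length P) / real k \<le> real (card N') \<and> C W ((!) P ` N') l)"
    using eq[OF a] unfolding viol_def .
qed

definition C_JR :: "nat set \<Rightarrow> nat set set \<Rightarrow> nat \<Rightarrow> bool" where
  "C_JR W G l \<longleftrightarrow> l = 1 \<and> 1 \<le> card (\<Inter>G) \<and> (\<forall>B\<in>G. card (B \<inter> W) < 1)"

lemma anti_JR: "C_JR W G l \<Longrightarrow> G' \<subseteq> G \<Longrightarrow> G' \<noteq> {} \<Longrightarrow> G \<subseteq> Pow (alts m) \<Longrightarrow> C_JR W G' l"
  unfolding C_JR_def using inter_card_anti[of G' G m] by auto

lemma eq_JR: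
  assumes k: "1 \<le> k" and P: "profile m P"
  shows "JR m k P W \<longleftrightarrow> \<not> viol k P (C_JR W)"
proof
  have n: "1 \<le> length P" using P by (rule prof_n)
  assume jr: "JR m k P W"
  show "\<not> viol k P (C_JR W)"
  proof
    assume "viol k P (C_JR W)"
    then obtain N' l where h: "N' \<subseteq> voters P" "l = 1" "real l * real (length P) / real k \<le> real (card N')"
      "1 \<le> card (\<Inter>((!) P ` N'))" "\<forall>B\<in>(!) P ` N'. card (B \<inter> W) < 1"
      unfolding viol_def C_JR_def by blast
    then have "cohesive k P 1 N'" by (simp add: cohesive_def)
    then obtain j where j: "j \<in> N'" "card (P ! j \<inter> W) \<ge> 1" using jr unfolding JR_def by blast
    have "P ! j \<in> (!) P ` N'" using j(1) by (rule imageI)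
    then have "card (P ! j \<inter> W) < 1" using h(5) by blast
    then show False using j(2) by linarith
  qed
next
  have n: "1 \<le> length P" using P by (rule prof_n)
  assume nv: "\<not> viol k P (C_JR W)"
  show "JR m k P W" unfolding JR_def
  proof (intro allI impI, rule ccontr)
    fix N' assume c: "cohesive k P 1 N'" and no: "\<not>(\<exists>j\<in>N'. 1 \<le> card (P ! j \<inter> W))"
    from c have h: "N' \<subseteq> voters P" "real 1 * real (length P) / real k \<le> real (card N')"
      "1 \<le> card (\<Inter>j\<in>N'. P ! j)" by (auto simp: cohesive_def)
    have ne: "N' \<noteq> {}" using nonempty_bound[OF _ n k h(2)] by simp
    have "C_JR W ((!) P ` N') 1" unfolding C_JR_def using h(3) no by (simp add: not_le)
    then have "N' \<subseteq> voters P \<and> N' \<noteq> {} \<and> 1 \<le> (1::nat) \<and>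
       real (1::nat) * real (length P) / real k \<le> real (card N') \<and> C_JR W ((!) P ` N') 1"
      using h ne by blast
    then have "viol k P (C_JR W)" unfolding viol_def by (intro exI)
    then show False using nv by contradiction
  qed
qed

lemma GST_JR: assumes "1 \<le> k" shows "GST m k (JR m k)"
proof (rule gst_generic2[of k C_JR m "JR m k", OF assms])
  show "\<And>W G G' l. C_JR W G l \<Longrightarrow> G' \<subseteq> G \<Longrightarrow> G' \<noteq> {} \<Longrightarrow> G \<subseteq> Pow (alts m) \<Longrightarrow> C_JR W G' l"
    by (rule anti_JR)
  show "\<And>P W. profile m P \<Longrightarrow> W \<in> committees m k \<Longrightarrow> JR m k P W \<longleftrightarrow> \<not> viol k P (C_JR W)"
    using eq_JR[OF assms] by blast
qed


lemma ratio_iff: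
  assumes "1 \<le> k" "1 \<le> n"
  shows "real a / real k \<le> real b / real n \<longleftrightarrow> real a * real n / real k \<le> real b"
  using assms by (simp add: field_simps)

lemma card_int_le: "T \<subseteq> alts m \<Longrightarrow> card (B \<inter> T) \<le> card T"
  by (rule card_mono) (auto intro: finite_subset)

definition C_EJR :: "nat set \<Rightarrow> nat set set \<Rightarrow> nat \<Rightarrow> bool" where
  "C_EJR W G l \<longleftrightarrow> l \<le> card (\<Inter>G) \<and> (\<forall>B\<in>G. card (B \<inter> W) < l)"

lemma anti_EJR: "C_EJR W G l \<Longrightarrow> G' \<subseteq> G \<Longrightarrow> G' \<noteq> {} \<Longrightarrow> G \<subseteq> Pow (alts m) \<Longrightarrow> C_EJR W G' l"
  unfolding C_EJR_def using inter_card_anti[of G' G m] by (meson order_trans subsetD)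

lemma eq_EJR:
  assumes k: "1 \<le> k" and P: "profile m P"
  shows "EJR m k P W \<longleftrightarrow> \<not> viol k P (C_EJR W)"
proof
  assume jr: "EJR m k P W"
  show "\<not> viol k P (C_EJR W)"
  proof
    assume "viol k P (C_EJR W)"
    then obtain N' l where h: "N' \<subseteq> voters P" "1 \<le> l" "real l * real (length P) / real k \<le> real (card N')"
      "l \<le> card (\<Inter>((!) P ` N'))" "\<forall>B\<in>(!) P ` N'. card (B \<inter> W) < l"
      unfolding viol_def C_EJR_def by blast
    then have "cohesive k P l N'" by (simp add: cohesive_def)
    then obtain j where j: "j \<in> N'" "card (P ! j \<inter> W) \<ge> l" using jr h(2) unfolding EJR_def by blast
    have "P ! j \<in> (!) P ` N'" using j(1) by (rule imageI)
    then have "card (P ! j \<inter> W) < l" using h(5) by blast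
    then show False using j(2) by linarith
  qed
next
  have n: "1 \<le> length P" using P by (rule prof_n)
  assume nv: "\<not> viol k P (C_EJR W)"
  show "EJR m k P W" unfolding EJR_def
  proof (intro allI impI, rule ccontr)
    fix l N' assume c: "1 \<le> l \<and> cohesive k P l N'" and no: "\<not>(\<exists>j\<in>N'. l \<le> card (P ! j \<inter> W))"
    from c have h: "N' \<subseteq> voters P" "real l * real (length P) / real k \<le> real (card N')"
      "l \<le> card (\<Inter>j\<in>N'. P ! j)" "1 \<le> l" by (auto simp: cohesive_def)
    have ne: "N' \<noteq> {}" using nonempty_bound[OF h(4) n k h(2)] by simp
    have "C_EJR W ((!) P ` N') l" unfolding C_EJR_def using h(3) no by (simp add: not_le)
    then have "N' \<subseteq> voters P \<and> N' \<noteq> {} \<and> 1 \<le> l \<and>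
       real l * real (length P) / real k \<le> real (card N') \<and> C_EJR W ((!) P ` N') l"
      using h ne by blast
    then have "viol k P (C_EJR W)" unfolding viol_def by (intro exI)
    then show False using nv by contradiction
  qed
qed

definition C_PJR :: "nat set \<Rightarrow> nat set set \<Rightarrow> nat \<Rightarrow> bool" where
  "C_PJR W G l \<longleftrightarrow> l \<le> card (\<Inter>G) \<and> card (W \<inter> \<Union>G) < l"

lemma anti_PJR: "C_PJR W G l \<Longrightarrow> G' \<subseteq> G \<Longrightarrow> G' \<noteq> {} \<Longrightarrow> G \<subseteq> Pow (alts m) \<Longrightarrow> C_PJR W G' l"
  unfolding C_PJR_def using inter_card_anti[of G' G m] union_card_anti[of G' G m W] by linarith

lemma eq_PJR:
  assumes k: "1 \<le> k" and P: "profile m P"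
  shows "PJR m k P W \<longleftrightarrow> \<not> viol k P (C_PJR W)"
proof
  assume jr: "PJR m k P W"
  show "\<not> viol k P (C_PJR W)"
  proof
    assume "viol k P (C_PJR W)"
    then obtain N' l where h: "N' \<subseteq> voters P" "1 \<le> l" "real l * real (length P) / real k \<le> real (card N')"
      "l \<le> card (\<Inter>((!) P ` N'))" "card (W \<inter> \<Union>((!) P ` N')) < l"
      unfolding viol_def C_PJR_def by blast
    then have "cohesive k P l N'" by (simp add: cohesive_def)
    then have "card (W \<inter> (\<Union>j\<in>N'. P ! j)) \<ge> l" using jr h(2) unfolding PJR_def by blast
    then show False using h(5) by linarith
  qed
next
  have n: "1 \<le> length P" using P by (rule prof_n)
  assume nv: "\<not> viol k P (C_PJR W)"
  show "PJR m k P W" unfolding PJR_def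
  proof (intro allI impI, rule ccontr)
    fix l N' assume c: "1 \<le> l \<and> cohesive k P l N'" and no: "\<not> l \<le> card (W \<inter> (\<Union>j\<in>N'. P ! j))"
    from c have h: "N' \<subseteq> voters P" "real l * real (length P) / real k \<le> real (card N')"
      "l \<le> card (\<Inter>j\<in>N'. P ! j)" "1 \<le> l" by (auto simp: cohesive_def)
    have ne: "N' \<noteq> {}" using nonempty_bound[OF h(4) n k h(2)] by simp
    have "C_PJR W ((!) P ` N') l" unfolding C_PJR_def using h(3) no by (simp add: not_le)
    then have "N' \<subseteq> voters P \<and> N' \<noteq> {} \<and> 1 \<le> l \<and>
       real l * real (length P) / real k \<le> real (card N') \<and> C_PJR W ((!) P ` N') l"
      using h ne by blast
    then have "viol k P (C_PJR W)" unfolding viol_def by (intro exI)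
    then show False using nv by contradiction
  qed
qed

definition C_EJRp :: "nat \<Rightarrow> nat set \<Rightarrow> nat set set \<Rightarrow> nat \<Rightarrow> bool" where
  "C_EJRp m W G l \<longleftrightarrow> (\<exists>a\<in>alts m - W. \<forall>B\<in>G. a \<in> B \<and> card (B \<inter> W) < l)"

lemma anti_EJRp: "C_EJRp m W G l \<Longrightarrow> G' \<subseteq> G \<Longrightarrow> G' \<noteq> {} \<Longrightarrow> G \<subseteq> Pow (alts m) \<Longrightarrow> C_EJRp m W G' l"
proof -
  assume c: "C_EJRp m W G l" and s: "G' \<subseteq> G"
  then obtain a where a: "a \<in> alts m - W" "\<forall>B\<in>G. a \<in> B \<and> card (B \<inter> W) < l"
    unfolding C_EJRp_def by blast
  then have "\<forall>B\<in>G'. a \<in> B \<and> card (B \<inter> W) < l" using s by blast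
  then show "C_EJRp m W G' l" using a(1) unfolding C_EJRp_def by blast
qed

lemma eq_EJRp:
  assumes k: "1 \<le> k" and P: "profile m P"
  shows "EJR_plus m k P W \<longleftrightarrow> \<not> viol k P (C_EJRp m W)"
proof
  assume jr: "EJR_plus m k P W"
  show "\<not> viol k P (C_EJRp m W)"
  proof
    assume "viol k P (C_EJRp m W)"
    then obtain N' l where h0: "N' \<subseteq> voters P" "1 \<le> l" "real l * real (length P) / real k \<le> real (card N')"
      "C_EJRp m W ((!) P ` N') l"
      unfolding viol_def by blast
    then obtain a where "a \<in> alts m - W" "\<forall>B\<in>(!) P ` N'. a \<in> B \<and> card (B \<inter> W) < l"
      unfolding C_EJRp_def by blast
    note h = h0(1-3) this
    have "\<forall>j\<in>N'. a \<in> P ! j \<and> card (P ! j \<inter> W) < l" using h(5) by simp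
    then have "a \<in> alts m - W \<and> l \<ge> 1 \<and> N' \<subseteq> voters P \<and>
      real (card N') \<ge> real l * real (length P) / real k \<and>
      (\<forall>j \<in> N'. a \<in> P ! j \<and> card (P ! j \<inter> W) < l)" using h(1-4) by (intro conjI)
    then have "\<exists>a l N'. a \<in> alts m - W \<and> l \<ge> 1 \<and> N' \<subseteq> voters P \<and>
      real (card N') \<ge> real l * real (length P) / real k \<and>
      (\<forall>j \<in> N'. a \<in> P ! j \<and> card (P ! j \<inter> W) < l)" by (intro exI)
    then show False using jr unfolding EJR_plus_def by contradiction
  qed
next
  have n: "1 \<le> length P" using P by (rule prof_n)
  assume nv: "\<not> viol k P (C_EJRp m W)"
  show "EJR_plus m k P W" unfolding EJR_plus_def
  proof
    assume "\<exists>a l N'. a \<in> alts m - W \<and> l \<ge> 1 \<and> N' \<subseteq> voters P \<and>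
      real (card N') \<ge> real l * real (length P) / real k \<and>
      (\<forall>j \<in> N'. a \<in> P ! j \<and> card (P ! j \<inter> W) < l)"
    then obtain a l N' where h: "a \<in> alts m - W" "1 \<le> l" "N' \<subseteq> voters P"
      "real l * real (length P) / real k \<le> real (card N')"
      "\<forall>j \<in> N'. a \<in> P ! j \<and> card (P ! j \<inter> W) < l" by blast
    have ne: "N' \<noteq> {}" using nonempty_bound[OF h(2) n k h(4)] by simp
    have "C_EJRp m W ((!) P ` N') l" unfolding C_EJRp_def using h(1,5) by auto
    then have "N' \<subseteq> voters P \<and> N' \<noteq> {} \<and> 1 \<le> l \<and>
       real l * real (length P) / real k \<le> real (card N') \<and> C_EJRp m W ((!) P ` N') l"
      using h ne by blast
    then have "viol k P (C_EJRp m W)" unfolding viol_def by (intro exI)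
    then show False using nv by contradiction
  qed
qed

definition C_PJRp :: "nat \<Rightarrow> nat set \<Rightarrow> nat set set \<Rightarrow> nat \<Rightarrow> bool" where
  "C_PJRp m W G l \<longleftrightarrow> (\<exists>a\<in>alts m - W. (\<forall>B\<in>G. a \<in> B) \<and> card (W \<inter> \<Union>G) < l)"

lemma anti_PJRp: "C_PJRp m W G l \<Longrightarrow> G' \<subseteq> G \<Longrightarrow> G' \<noteq> {} \<Longrightarrow> G \<subseteq> Pow (alts m) \<Longrightarrow> C_PJRp m W G' l"
proof -
  assume c: "C_PJRp m W G l" and s: "G' \<subseteq> G" and g: "G \<subseteq> Pow (alts m)"
  then obtain a where a: "a \<in> alts m - W" "\<forall>B\<in>G. a \<in> B" "card (W \<inter> \<Union>G) < l"
    unfolding C_PJRp_def by blast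
  then have "\<forall>B\<in>G'. a \<in> B" using s by blast
  moreover have "card (W \<inter> \<Union>G') < l" using union_card_anti[OF s g, of W] a(3) by linarith
  ultimately show "C_PJRp m W G' l" using a(1) unfolding C_PJRp_def by blast
qed

lemma eq_PJRp:
  assumes k: "1 \<le> k" and P: "profile m P"
  shows "PJR_plus m k P W \<longleftrightarrow> \<not> viol k P (C_PJRp m W)"
proof
  assume jr: "PJR_plus m k P W"
  show "\<not> viol k P (C_PJRp m W)"
  proof
    assume "viol k P (C_PJRp m W)"
    then obtain N' l where h0: "N' \<subseteq> voters P" "1 \<le> l" "real l * real (length P) / real k \<le> real (card N')"
      "C_PJRp m W ((!) P ` N') l"
      unfolding viol_def by blast
    then obtain a where "a \<in> alts m - W" "\<forall>B\<in>(!) P ` N'. a \<in> B" "card (W \<inter> \<Union>((!) P ` N')) < l"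
      unfolding C_PJRp_def by blast
    note h = h0(1-3) this
    have "\<forall>j\<in>N'. a \<in> P ! j" using h(5) by simp
    then have "a \<in> alts m - W \<and> l \<ge> 1 \<and> N' \<subseteq> voters P \<and>
      real (card N') \<ge> real l * real (length P) / real k \<and>
      (\<forall>j \<in> N'. a \<in> P ! j) \<and> card (W \<inter> (\<Union>j \<in> N'. P ! j)) < l" using h(1-4,6) by (intro conjI)
    then have "\<exists>a l N'. a \<in> alts m - W \<and> l \<ge> 1 \<and> N' \<subseteq> voters P \<and>
      real (card N') \<ge> real l * real (length P) / real k \<and>
      (\<forall>j \<in> N'. a \<in> P ! j) \<and> card (W \<inter> (\<Union>j \<in> N'. P ! j)) < l" by (intro exI)
    then show False using jr unfolding PJR_plus_def by contradiction
  qed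
next
  have n: "1 \<le> length P" using P by (rule prof_n)
  assume nv: "\<not> viol k P (C_PJRp m W)"
  show "PJR_plus m k P W" unfolding PJR_plus_def
  proof
    assume "\<exists>a l N'. a \<in> alts m - W \<and> l \<ge> 1 \<and> N' \<subseteq> voters P \<and>
      real (card N') \<ge> real l * real (length P) / real k \<and>
      (\<forall>j \<in> N'. a \<in> P ! j) \<and> card (W \<inter> (\<Union>j \<in> N'. P ! j)) < l"
    then obtain a l N' where h: "a \<in> alts m - W" "1 \<le> l" "N' \<subseteq> voters P"
      "real l * real (length P) / real k \<le> real (card N')"
      "\<forall>j \<in> N'. a \<in> P ! j" "card (W \<inter> (\<Union>j \<in> N'. P ! j)) < l" by blast
    have ne: "N' \<noteq> {}" using nonempty_bound[OF h(2) n k h(4)] by simp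
    have "C_PJRp m W ((!) P ` N') l" unfolding C_PJRp_def using h(1,5,6) by auto
    then have "N' \<subseteq> voters P \<and> N' \<noteq> {} \<and> 1 \<le> l \<and>
       real l * real (length P) / real k \<le> real (card N') \<and> C_PJRp m W ((!) P ` N') l"
      using h ne by blast
    then have "viol k P (C_PJRp m W)" unfolding viol_def by (intro exI)
    then show False using nv by contradiction
  qed
qed


definition C_CORE :: "nat \<Rightarrow> nat set \<Rightarrow> nat set set \<Rightarrow> nat \<Rightarrow> bool" where
  "C_CORE m W G l \<longleftrightarrow> (\<exists>W'. W' \<subseteq> alts m \<and> card W' = l \<and> (\<forall>B\<in>G. card (B \<inter> W) < card (B \<inter> W')))"

lemma anti_CORE: "C_CORE m W G l \<Longrightarrow> G' \<subseteq> G \<Longrightarrow> G' \<noteq> {} \<Longrightarrow> G \<subseteq> Pow (alts m) \<Longrightarrow> C_CORE m W G' l"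
proof -
  assume c: "C_CORE m W G l" and s: "G' \<subseteq> G"
  then obtain W' where a: "W' \<subseteq> alts m" "card W' = l" "\<forall>B\<in>G. card (B \<inter> W) < card (B \<inter> W')"
    unfolding C_CORE_def by blast
  then have "\<forall>B\<in>G'. card (B \<inter> W) < card (B \<inter> W')" using s by blast
  then show "C_CORE m W G' l" using a(1,2) unfolding C_CORE_def by blast
qed

lemma eq_CORE:
  assumes k: "1 \<le> k" and P: "profile m P"
  shows "CORE m k P W \<longleftrightarrow> \<not> viol k P (C_CORE m W)"
proof
  have n: "1 \<le> length P" using P by (rule prof_n)
  assume core: "CORE m k P W"
  show "\<not> viol k P (C_CORE m W)"
  proof
    assume "viol k P (C_CORE m W)"
    then obtain N' l where h0: "N' \<subseteq> voters P" "N' \<noteq> {}" "1 \<le> l"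
      "real l * real (length P) / real k \<le> real (card N')" "C_CORE m W ((!) P ` N') l"
      unfolding viol_def by blast
    then obtain W' where w: "W' \<subseteq> alts m" "card W' = l" "\<forall>B\<in>(!) P ` N'. card (B \<inter> W) < card (B \<inter> W')"
      unfolding C_CORE_def by blast
    have r: "real (card W') / real k \<le> real (card N') / real (length P)"
      using ratio_iff[OF k n] h0(4) w(2) by simp
    have "N' \<subseteq> voters P \<and> N' \<noteq> {} \<and> W' \<subseteq> alts m \<and>
      real (card W') / real k \<le> real (card N') / real (length P)" using h0(1,2) w(1) r by (intro conjI)
    then have "\<exists>j\<in>N'. card (P ! j \<inter> W') \<le> card (P ! j \<inter> W)"
      by (rule core[unfolded CORE_def, THEN spec[of _ N'], THEN spec[of _ W'], THEN mp])
    then obtain j where j: "j \<in> N'" "card (P ! j \<inter> W') \<le> card (P ! j \<inter> W)" by (elim bexE)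
    have "P ! j \<in> (!) P ` N'" using j(1) by (rule imageI)
    then have "card (P ! j \<inter> W) < card (P ! j \<inter> W')" using w(3) by blast
    then show False using j(2) by linarith
  qed
next
  have n: "1 \<le> length P" using P by (rule prof_n)
  assume nv: "\<not> viol k P (C_CORE m W)"
  show "CORE m k P W" unfolding CORE_def
  proof (intro allI impI, rule ccontr)
    fix N' W' assume c: "N' \<subseteq> voters P \<and> N' \<noteq> {} \<and> W' \<subseteq> alts m \<and>
      real (card W') / real k \<le> real (card N') / real (length P)"
      and no: "\<not>(\<exists>j\<in>N'. card (P ! j \<inter> W') \<le> card (P ! j \<inter> W))"
    from c have h: "N' \<subseteq> voters P" "N' \<noteq> {}" "W' \<subseteq> alts m"
      "real (card W') / real k \<le> real (card N') / real (length P)" by auto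
    have all: "\<forall>j\<in>N'. card (P ! j \<inter> W) < card (P ! j \<inter> W')" using no by (simp add: not_le)
    obtain j0 where j0: "j0 \<in> N'" using h(2) by blast
    have "card (P ! j0 \<inter> W') \<le> card W'" using h(3) by (rule card_int_le)
    moreover have "card (P ! j0 \<inter> W) < card (P ! j0 \<inter> W')" using all j0 by blast
    ultimately have l1: "1 \<le> card W'" by linarith
    have b: "real (card W') * real (length P) / real k \<le> real (card N')"
      using ratio_iff[OF k n] h(4) by simp
    have "\<forall>B\<in>(!) P ` N'. card (B \<inter> W) < card (B \<inter> W')" using all by simp
    then have "C_CORE m W ((!) P ` N') (card W')" unfolding C_CORE_def using h(3) by blast
    then have "N' \<subseteq> voters P \<and> N' \<noteq> {} \<and> 1 \<le> card W' \<and>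
       real (card W') * real (length P) / real k \<le> real (card N') \<and> C_CORE m W ((!) P ` N') (card W')"
      using h(1,2) l1 b by (intro conjI)
    then have "viol k P (C_CORE m W)" unfolding viol_def by (intro exI)
    then show False using nv by contradiction
  qed
qed

definition C_FJR :: "nat \<Rightarrow> nat set \<Rightarrow> nat set set \<Rightarrow> nat \<Rightarrow> bool" where
  "C_FJR m W G l \<longleftrightarrow> (\<exists>\<beta> T. 1 \<le> \<beta> \<and> T \<subseteq> alts m \<and> card T = l \<and>
      (\<forall>B\<in>G. \<beta> \<le> card (B \<inter> T) \<and> card (B \<inter> W) < \<beta>))"

lemma anti_FJR: "C_FJR m W G l \<Longrightarrow> G' \<subseteq> G \<Longrightarrow> G' \<noteq> {} \<Longrightarrow> G \<subseteq> Pow (alts m) \<Longrightarrow> C_FJR m W G' l"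
proof -
  assume c: "C_FJR m W G l" and s: "G' \<subseteq> G"
  then obtain \<beta> T where a: "1 \<le> \<beta>" "T \<subseteq> alts m" "card T = l"
    "\<forall>B\<in>G. \<beta> \<le> card (B \<inter> T) \<and> card (B \<inter> W) < \<beta>"
    unfolding C_FJR_def by blast
  then have "\<forall>B\<in>G'. \<beta> \<le> card (B \<inter> T) \<and> card (B \<inter> W) < \<beta>" using s by blast
  then show "C_FJR m W G' l" using a(1-3) unfolding C_FJR_def by blast
qed

lemma eq_FJR:
  assumes k: "1 \<le> k" and P: "profile m P"
  shows "FJR m k P W \<longleftrightarrow> \<not> viol k P (C_FJR m W)"
proof
  assume fjr: "FJR m k P W"
  show "\<not> viol k P (C_FJR m W)"
  proof
    assume "viol k P (C_FJR m W)"
    then obtain N' l where h0: "N' \<subseteq> voters P" "N' \<noteq> {}" "1 \<le> l"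
      "real l * real (length P) / real k \<le> real (card N')" "C_FJR m W ((!) P ` N') l"
      unfolding viol_def by blast
    then obtain \<beta> T where w: "1 \<le> \<beta>" "T \<subseteq> alts m" "card T = l"
      "\<forall>B\<in>(!) P ` N'. \<beta> \<le> card (B \<inter> T) \<and> card (B \<inter> W) < \<beta>"
      unfolding C_FJR_def by blast
    have all: "\<forall>j\<in>N'. \<beta> \<le> card (P ! j \<inter> T) \<and> card (P ! j \<inter> W) < \<beta>" using w(4) by simp
    have "\<beta> \<ge> 1 \<and> T \<subseteq> alts m \<and> N' \<subseteq> voters P \<and> N' \<noteq> {} \<and>
      real (card N') \<ge> real (card T) * real (length P) / real k \<and>
      (\<forall>j \<in> N'. card (P ! j \<inter> T) \<ge> \<beta>)" using w(1,2,3) h0(1,2,4) all by simp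
    then have "\<exists>j\<in>N'. card (P ! j \<inter> W) \<ge> \<beta>"
      by (rule fjr[unfolded FJR_def, THEN spec[of _ \<beta>], THEN spec[of _ T], THEN spec[of _ N'], THEN mp])
    then obtain j where j: "j \<in> N'" "card (P ! j \<inter> W) \<ge> \<beta>" by (elim bexE)
    have "card (P ! j \<inter> W) < \<beta>" using all j(1) by blast
    then show False using j(2) by linarith
  qed
next
  have n: "1 \<le> length P" using P by (rule prof_n)
  assume nv: "\<not> viol k P (C_FJR m W)"
  show "FJR m k P W" unfolding FJR_def
  proof (intro allI impI, rule ccontr)
    fix \<beta> T N' assume c: "\<beta> \<ge> 1 \<and> T \<subseteq> alts m \<and> N' \<subseteq> voters P \<and> N' \<noteq> {} \<and>
      real (card N') \<ge> real (card T) * real (length P) / real k \<and>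
      (\<forall>j \<in> N'. card (P ! j \<inter> T) \<ge> \<beta>)"
      and no: "\<not>(\<exists>j\<in>N'. \<beta> \<le> card (P ! j \<inter> W))"
    from c have h: "1 \<le> \<beta>" "T \<subseteq> alts m" "N' \<subseteq> voters P" "N' \<noteq> {}"
      "real (card T) * real (length P) / real k \<le> real (card N')"
      "\<forall>j \<in> N'. card (P ! j \<inter> T) \<ge> \<beta>" by auto
    have all: "\<forall>j\<in>N'. card (P ! j \<inter> W) < \<beta>" using no by (simp add: not_le)
    obtain j0 where j0: "j0 \<in> N'" using h(4) by blast
    have "card (P ! j0 \<inter> T) \<le> card T" using h(2) by (rule card_int_le)
    moreover have "\<beta> \<le> card (P ! j0 \<inter> T)" using h(6) j0 by blast
    ultimately have l1: "1 \<le> card T" using h(1) by linarith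
    have "\<forall>B\<in>(!) P ` N'. \<beta> \<le> card (B \<inter> T) \<and> card (B \<inter> W) < \<beta>" using h(6) all by simp
    then have "C_FJR m W ((!) P ` N') (card T)" unfolding C_FJR_def using h(1,2) by blast
    then have "N' \<subseteq> voters P \<and> N' \<noteq> {} \<and> 1 \<le> card T \<and>
       real (card T) * real (length P) / real k \<le> real (card N') \<and> C_FJR m W ((!) P ` N') (card T)"
      using h(3,4,5) l1 by (intro conjI)
    then have "viol k P (C_FJR m W)" unfolding viol_def by (intro exI)
    then show False using nv by contradiction
  qed
qed

lemma GST_from:
  assumes k: "1 \<le> k"
  and anti: "\<And>W G G' l. C W G l \<Longrightarrow> G' \<subseteq> G \<Longrightarrow> G' \<noteq> {} \<Longrightarrow> G \<subseteq> Pow (alts m) \<Longrightarrow> C W G' l"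
  and eq: "\<And>P W. profile m P \<Longrightarrow> X P W \<longleftrightarrow> \<not> viol k P (C W)"
  shows "GST m k X"
proof (rule gst_generic2[of k C m X, OF k])
  show "\<And>W G G' l. C W G l \<Longrightarrow> G' \<subseteq> G \<Longrightarrow> G' \<noteq> {} \<Longrightarrow> G \<subseteq> Pow (alts m) \<Longrightarrow> C W G' l"
    by (rule anti)
  show "\<And>P W. profile m P \<Longrightarrow> W \<in> committees m k \<Longrightarrow> X P W \<longleftrightarrow> \<not> viol k P (C W)"
    by (rule eq)
qed

theorem theorem3:
  fixes m k :: nat
  assumes "1 \<le> k" and "k \<le> m"
  shows "GST m k (CORE m k) \<and> GST m k (JR m k) \<and> GST m k (PJR m k) \<and>
         GST m k (EJR m k) \<and> GST m k (PJR_plus m k) \<and> GST m k (EJR_plus m k) \<and>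
         GST m k (FJR m k)"
proof (intro conjI)
  show "GST m k (CORE m k)"
    by (rule GST_from[of k "C_CORE m" m, OF assms(1)]) (rule anti_CORE, assumption+, rule eq_CORE[OF assms(1)], assumption)
  show "GST m k (JR m k)"
    by (rule GST_from[of k C_JR m, OF assms(1)]) (rule anti_JR, assumption+, rule eq_JR[OF assms(1)], assumption)
  show "GST m k (PJR m k)"
    by (rule GST_from[of k C_PJR m, OF assms(1)]) (rule anti_PJR, assumption+, rule eq_PJR[OF assms(1)], assumption)
  show "GST m k (EJR m k)"
    by (rule GST_from[of k C_EJR m, OF assms(1)]) (rule anti_EJR, assumption+, rule eq_EJR[OF assms(1)], assumption)
  show "GST m k (PJR_plus m k)"
    by (rule GST_from[of k "C_PJRp m" m, OF assms(1)]) (rule anti_PJRp, assumption+, rule eq_PJRp[OF assms(1)], assumption)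
  show "GST m k (EJR_plus m k)"
    by (rule GST_from[of k "C_EJRp m" m, OF assms(1)]) (rule anti_EJRp, assumption+, rule eq_EJRp[OF assms(1)], assumption)
  show "GST m k (FJR m k)"
    by (rule GST_from[of k "C_FJR m" m, OF assms(1)]) (rule anti_FJR, assumption+, rule eq_FJR[OF assms(1)], assumption)
qed

end
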